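(* Every uniform space $(X,\mathcal U)$ is rotund.
   Context: Entourages are subsets of $X\times X$ containing the diagonal; $U\circ V=\{(x,z):\exists y\,((x,y)\in U,(y,z)\in V)\}$, $U^{-1}=\{(y,x):(x,y)\in U\}$, $B(x;U)=\{y:(x,y)\in U\}$, $B(A;U)=\bigcup_{a\in A}B(a;U)$. A uniformity is a family $\mathcal U$ of entourages closed under supersets, with any two members containing a common member, each $U\in\mathcal U$ containing $V\circ V$ for some $V\in\mathcal U$, and with $U^{-1}\in\mathcal U$ for all $U\in\mathcal U$; its topology: $W$ open iff each $x\in W$ has $B(x;U)\subset W$ for some $U\in\mathcal U$. A base of $\mathcal U$ is a subfamily such that each member of $\mathcal U$ contains one of its members; it is multiplicative if closed under $\circ$ and rotund if $B(\overline A;U)\subset\overline{B(A;W\circ U)}$ for all $A\subset X$ and all $U,W$ in the base (closures in the generated topology). $(X,\mathcal U)$ is rotund if $\mathcal U$ has a rotund multiplicative base. *)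

theory Defs
  imports "HOL-Analysis.Analysis"
begin

text \<open>Composition U \<circ> V of the paper is the relational composition U O V,
  B(x;U) is U `` {x} and B(A;U) is U `` A.\<close>

definition uniformity :: "'a set \<Rightarrow> ('a \<times> 'a) set set \<Rightarrow> bool" where
  "uniformity X \<U> \<longleftrightarrow>
     (\<forall>U\<in>\<U>. Id_on X \<subseteq> U \<and> U \<subseteq> X \<times> X) \<and>
     (\<forall>U\<in>\<U>. \<forall>V. U \<subseteq> V \<and> V \<subseteq> X \<times> X \<longrightarrow> V \<in> \<U>) \<and>
     (\<forall>U\<in>\<U>. \<forall>V\<in>\<U>. \<exists>W\<in>\<U>. W \<subseteq> U \<and> W \<subseteq> V) \<and>
     (\<forall>U\<in>\<U>. \<exists>V\<in>\<U>. V O V \<subseteq> U) \<and>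
     (\<forall>U\<in>\<U>. converse U \<in> \<U>)"

definition utopology :: "'a set \<Rightarrow> ('a \<times> 'a) set set \<Rightarrow> 'a topology" where
  "utopology X \<U> = topology (\<lambda>W. W \<subseteq> X \<and> (\<forall>x\<in>W. \<exists>U\<in>\<U>. U `` {x} \<subseteq> W))"

definition is_base :: "('a \<times> 'a) set set \<Rightarrow> ('a \<times> 'a) set set \<Rightarrow> bool" where
  "is_base \<U> \<B> \<longleftrightarrow> \<B> \<subseteq> \<U> \<and> (\<forall>U\<in>\<U>. \<exists>V\<in>\<B>. V \<subseteq> U)"

definition multiplicative :: "('a \<times> 'a) set set \<Rightarrow> bool" where
  "multiplicative \<B> \<longleftrightarrow> (\<forall>U\<in>\<B>. \<forall>V\<in>\<B>. U O V \<in> \<B>)"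

definition rotund_base :: "'a set \<Rightarrow> ('a \<times> 'a) set set \<Rightarrow> ('a \<times> 'a) set set \<Rightarrow> bool" where
  "rotund_base X \<U> \<B> \<longleftrightarrow>
     (\<forall>A. A \<subseteq> X \<longrightarrow> (\<forall>U\<in>\<B>. \<forall>W\<in>\<B>.
        U `` (utopology X \<U> closure_of A) \<subseteq> utopology X \<U> closure_of ((W O U) `` A)))"

definition rotund :: "'a set \<Rightarrow> ('a \<times> 'a) set set \<Rightarrow> bool" where
  "rotund X \<U> \<longleftrightarrow> (\<exists>\<B>. is_base \<U> \<B> \<and> multiplicative \<B> \<and> rotund_base X \<U> \<B>)"

end

theory Submission
  imports Defs
begin

lemma unif_sub: "uniformity X \<U> \<Longrightarrow> U \<in> \<U> \<Longrightarrow> U \<subseteq> X \<times> X"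
  unfolding uniformity_def by (elim conjE) (drule bspec, assumption, elim conjE, assumption)
lemma unif_diag: "uniformity X \<U> \<Longrightarrow> U \<in> \<U> \<Longrightarrow> a \<in> X \<Longrightarrow> (a, a) \<in> U"
  unfolding uniformity_def by (elim conjE) (drule bspec, assumption, auto)
lemma unif_sup: "uniformity X \<U> \<Longrightarrow> U \<in> \<U> \<Longrightarrow> U \<subseteq> V \<Longrightarrow> V \<subseteq> X \<times> X \<Longrightarrow> V \<in> \<U>"
  unfolding uniformity_def by (elim conjE) (drule bspec[where x=U], assumption, auto)
lemma unif_int: "uniformity X \<U> \<Longrightarrow> U \<in> \<U> \<Longrightarrow> V \<in> \<U> \<Longrightarrow> \<exists>W\<in>\<U>. W \<subseteq> U \<and> W \<subseteq> V"
  unfolding uniformity_def by (elim conjE) (drule bspec[where x=U], assumption, auto)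
lemma unif_half: "uniformity X \<U> \<Longrightarrow> U \<in> \<U> \<Longrightarrow> \<exists>V\<in>\<U>. V O V \<subseteq> U"
  unfolding uniformity_def by (elim conjE) (drule bspec[where x=U], assumption, auto)
lemma unif_conv: "uniformity X \<U> \<Longrightarrow> U \<in> \<U> \<Longrightarrow> converse U \<in> \<U>"
  unfolding uniformity_def by (elim conjE) (drule bspec[where x=U], assumption, auto)


lemma istop_u:
  assumes u: "uniformity X \<U>"
  shows "istopology (\<lambda>W. W \<subseteq> X \<and> (\<forall>x\<in>W. \<exists>U\<in>\<U>. U `` {x} \<subseteq> W))"
  unfolding istopology_def
proof (rule conjI)
  show "\<forall>S T. S \<subseteq> X \<and> (\<forall>x\<in>S. \<exists>U\<in>\<U>. U `` {x} \<subseteq> S) \<longrightarrow> T \<subseteq> X \<and> (\<forall>x\<in>T. \<exists>U\<in>\<U>. U `` {x} \<subseteq> T) \<longrightarrow>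
     S \<inter> T \<subseteq> X \<and> (\<forall>x\<in>S \<inter> T. \<exists>U\<in>\<U>. U `` {x} \<subseteq> S \<inter> T)"
  proof (intro allI impI conjI ballI)
    fix S T x assume S: "S \<subseteq> X \<and> (\<forall>x\<in>S. \<exists>U\<in>\<U>. U `` {x} \<subseteq> S)"
      and T: "T \<subseteq> X \<and> (\<forall>x\<in>T. \<exists>U\<in>\<U>. U `` {x} \<subseteq> T)" and x: "x \<in> S \<inter> T"
    from S x obtain U1 where U1: "U1 \<in> \<U>" "U1 `` {x} \<subseteq> S" by auto
    from T x obtain U2 where U2: "U2 \<in> \<U>" "U2 `` {x} \<subseteq> T" by auto
    from unif_int[OF u U1(1) U2(1)] obtain W where "W \<in> \<U>" "W \<subseteq> U1" "W \<subseteq> U2" by auto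
    with U1 U2 show "\<exists>U\<in>\<U>. U `` {x} \<subseteq> S \<inter> T" by blast
  next
    fix S T assume "S \<subseteq> X \<and> (\<forall>x\<in>S. \<exists>U\<in>\<U>. U `` {x} \<subseteq> S)"
    then show "S \<inter> T \<subseteq> X" by auto
  qed
next
  show "\<forall>K. (\<forall>k\<in>K. k \<subseteq> X \<and> (\<forall>x\<in>k. \<exists>U\<in>\<U>. U `` {x} \<subseteq> k)) \<longrightarrow>
      \<Union>K \<subseteq> X \<and> (\<forall>x\<in>\<Union>K. \<exists>U\<in>\<U>. U `` {x} \<subseteq> \<Union>K)"
  proof (intro allI impI conjI ballI)
    fix K :: "'a set set" assume K: "\<forall>k\<in>K. k \<subseteq> X \<and> (\<forall>x\<in>k. \<exists>U\<in>\<U>. U `` {x} \<subseteq> k)"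
    then show "\<Union>K \<subseteq> X" by auto
    fix x assume "x \<in> \<Union>K"
    then obtain k where k: "k \<in> K" "x \<in> k" by auto
    from bspec[OF K k(1)] k(2) obtain U where "U \<in> \<U>" "U `` {x} \<subseteq> k" by auto
    with k show "\<exists>U\<in>\<U>. U `` {x} \<subseteq> \<Union>K" by auto
  qed
qed

lemma utop_open:
  assumes u: "uniformity X \<U>"
  shows "openin (utopology X \<U>) = (\<lambda>W. W \<subseteq> X \<and> (\<forall>x\<in>W. \<exists>U\<in>\<U>. U `` {x} \<subseteq> W))"
  unfolding utopology_def by (rule topology_inverse'[OF istop_u[OF u]])

lemma nbhd_meets:
  assumes u: "uniformity X \<U>" and V: "V \<in> \<U>"
    and x: "x \<in> utopology X \<U> closure_of A"
  shows "\<exists>a\<in>A. (x, a) \<in> V"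
proof -
  let ?I = "{z \<in> X. \<exists>U\<in>\<U>. U `` {z} \<subseteq> V `` {x}}"
  have xX: "x \<in> topspace (utopology X \<U>)" using x by (simp add: in_closure_of)
  then obtain S where "openin (utopology X \<U>) S" "x \<in> S" unfolding topspace_def by auto
  hence "x \<in> X" unfolding utop_open[OF u] by auto
  have op: "openin (utopology X \<U>) ?I"
    unfolding utop_open[OF u]
  proof (intro conjI ballI)
    show "?I \<subseteq> X" by blast
    fix z assume "z \<in> ?I"
    then obtain U where U: "U \<in> \<U>" "U `` {z} \<subseteq> V `` {x}" by blast
    then obtain U' where U': "U' \<in> \<U>" "U' O U' \<subseteq> U"
      using unif_half[OF u] by meson
    have "U' `` {z} \<subseteq> ?I"
    proof
      fix z' assume z': "z' \<in> U' `` {z}"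
      have "z' \<in> X" using z' U'(1) unif_sub[OF u] by blast
      moreover have "U' `` {z'} \<subseteq> V `` {x}" using z' U' U by blast
      ultimately show "z' \<in> ?I" using U' by blast
    qed
    then show "\<exists>U\<in>\<U>. U `` {z} \<subseteq> ?I" using U' by blast
  qed
  have "x \<in> ?I" using \<open>x \<in> X\<close> V by blast
  then obtain a where "a \<in> A" "a \<in> ?I" using x op by (meson in_closure_of)
  have "a \<in> V `` {x}"
  proof -
    from \<open>a \<in> ?I\<close> obtain U where "a \<in> X" "U \<in> \<U>" "U `` {a} \<subseteq> V `` {x}" by blast
    moreover have "(a,a) \<in> U" using calculation unif_diag[OF u] by blast
    ultimately show ?thesis by blast
  qed
  with \<open>a \<in> A\<close> show ?thesis by blast
qed

theorem proposition1p9: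
  fixes X :: "'a set" and \<U> :: "('a \<times> 'a) set set"
  assumes "uniformity X \<U>"
  shows "rotund X \<U>"
  unfolding rotund_def
proof (intro exI conjI)
  note u = assms
  show "is_base \<U> \<U>" unfolding is_base_def by blast
  show "multiplicative \<U>" unfolding multiplicative_def
  proof (intro ballI)
    fix U V assume U: "U \<in> \<U>" and V: "V \<in> \<U>"
    have "U \<subseteq> U O V" using U V unif_diag[OF u] unif_sub[OF u] by blast
    moreover have "U O V \<subseteq> X \<times> X" using U V unif_sub[OF u] by blast
    ultimately show "U O V \<in> \<U>" using U unif_sup[OF u] by blast
  qed
  show "rotund_base X \<U> \<U>" unfolding rotund_base_def
  proof (intro allI impI ballI subsetI)
    fix A U W y assume A: "A \<subseteq> X" and U: "U \<in> \<U>" and W: "W \<in> \<U>"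
      and y: "y \<in> U `` (utopology X \<U> closure_of A)"
    then obtain x where x: "x \<in> utopology X \<U> closure_of A" "(x, y) \<in> U" by blast
    have "converse W \<in> \<U>" using W unif_conv[OF u] by blast
    then obtain a where a: "a \<in> A" "(a, x) \<in> W" using nbhd_meets[OF u _ x(1)] by blast
    have yin: "y \<in> (W O U) `` A" using a x by blast
    have "y \<in> X" using x U unif_sub[OF u] by blast
    have "openin (utopology X \<U>) X" unfolding utop_open[OF u] using U unif_sub[OF u] by blast
    hence "y \<in> topspace (utopology X \<U>)" using \<open>y \<in> X\<close> unfolding topspace_def by blast
    then show "y \<in> utopology X \<U> closure_of ((W O U) `` A)"
      unfolding in_closure_of using yin by blast
  qed
qed

end
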